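(* Let $q$ be a prime power, $F=\mathbb{F}_q$, $m\ge1$ with $\gcd(q,m)=1$, and $R=F[x]/\langle x^m-1\rangle$. Let $C\subseteq R^2$ be the quasi-cyclic code (R-submodule) generated by one element $(g_{11}(x),g_{12}(x))$, where $g_{11}(x)\mid x^m-1$ and $\deg g_{12}<m$. Let $g(x)=\gcd(g_{11}(x),g_{12}(x))$. Then $C$ is Euclidean LCD if and only if $$\gcd\left(\frac{x^m-1}{g(x)},\ g_{11}(x)\bar g_{11}(x)+g_{12}(x)\bar g_{12}(x)\right)=1.$$
   Context: Elements of $R$ are represented by polynomials of degree $<m$ and identified with their coefficient vectors in $F^m$; a quasi-cyclic code of length $2m$ and index 2 is an $R$-submodule of $R^2$. The Euclidean inner product of $(a_1,a_2),(b_1,b_2)\in R^2$ is the sum of the standard dot products of the coefficient vectors of $a_1,b_1$ and of $a_2,b_2$; $C$ is Euclidean LCD if $C\cap C^{\perp_e}=\{0\}$. For a polynomial $f$ of degree at most $m$, $\bar f(x)=x^m f(x^{-1})$. *)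

theory Defs
  imports "HOL-Computational_Algebra.Computational_Algebra"
begin

definition xm1 :: "nat \<Rightarrow> 'a::comm_ring_1 poly" where
  "xm1 m = monom 1 m - 1"

text \<open>Elements of R are represented by polynomials of degree < m; R^2 by pairs of such.\<close>
definition R2 :: "nat \<Rightarrow> ('a::comm_ring_1 poly \<times> 'a poly) set" where
  "R2 m = {(a, b). degree a < m \<and> degree b < m}"

definition qc_code :: "nat \<Rightarrow> 'a::field poly \<Rightarrow> 'a poly \<Rightarrow> ('a poly \<times> 'a poly) set" where
  "qc_code m g11 g12 = {(a * g11 mod xm1 m, a * g12 mod xm1 m) | a. True}"

definition eucl_ip :: "nat \<Rightarrow> ('a::comm_ring_1 poly \<times> 'a poly) \<Rightarrow> ('a poly \<times> 'a poly) \<Rightarrow> 'a" where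
  "eucl_ip m u v = (\<Sum>i<m. coeff (fst u) i * coeff (fst v) i + coeff (snd u) i * coeff (snd v) i)"

definition eucl_dual :: "nat \<Rightarrow> ('a::comm_ring_1 poly \<times> 'a poly) set \<Rightarrow> ('a poly \<times> 'a poly) set" where
  "eucl_dual m C = {v \<in> R2 m. \<forall>c\<in>C. eucl_ip m c v = 0}"

definition euclidean_LCD :: "nat \<Rightarrow> ('a::comm_ring_1 poly \<times> 'a poly) set \<Rightarrow> bool" where
  "euclidean_LCD m C \<longleftrightarrow> C \<inter> eucl_dual m C = {(0, 0)}"

text \<open>bar f(x) = x^m f(1/x), for deg f \<le> m.\<close>
definition reflect_m :: "nat \<Rightarrow> 'a::comm_ring_1 poly \<Rightarrow> 'a poly" where
  "reflect_m m f = (\<Sum>i\<le>m. monom (coeff f (m - i)) i)"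

end

theory Submission imports Defs "HOL-Number_Theory.Cong" begin

lemma degree_xm1: "m \<ge> 1 \<Longrightarrow> degree (xm1 m :: 'a::field poly) = m"
  unfolding xm1_def using degree_add_eq_left[of "-1" "monom 1 m"] by (simp add: degree_monom_eq)

lemma xm1_nz: "m \<ge> 1 \<Longrightarrow> xm1 m \<noteq> (0 :: 'a::field poly)"
  using degree_xm1[of m] by (metis degree_0 not_one_le_zero)

lemma monom_1_cong: "[monom 1 m = (1::'a::field poly)] (mod xm1 m)"
  unfolding xm1_def cong_iff_dvd_diff by simp

lemma monom_cong_mod: "[monom c a = (monom c (a mod m) :: 'a::field poly)] (mod xm1 m)"
proof -
  have "monom c a = monom c (a mod m) * (monom 1 m) ^ (a div m)"
    by (simp add: monom_power mult_monom)
  also have "[\<dots> = monom c (a mod m) * 1 ^ (a div m)] (mod xm1 m)"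
    by (intro cong_mult cong_pow cong_refl monom_1_cong)
  finally show ?thesis by simp
qed

lemma monom_cong: "a mod m = b mod m \<Longrightarrow> [monom c a = (monom c b :: 'a::field poly)] (mod xm1 m)"
  by (metis monom_cong_mod cong_sym cong_trans)

lemma of_nat_card_finite: "of_nat (card (UNIV :: 'a::{finite,comm_ring_1} set)) = (0::'a)"
proof -
  have "(\<Sum>y\<in>(UNIV::'a set). y + 1) = (\<Sum>y\<in>UNIV. y)"
    by (rule sum.reindex_bij_witness[of _ "\<lambda>y. y - 1" "\<lambda>y. y + 1"]; simp)
  then show ?thesis by (simp add: sum.distrib)
qed

lemma of_nat_m_nz:
  assumes "coprime (card (UNIV :: 'a::{finite,field} set)) m"
  shows "of_nat m \<noteq> (0::'a)"
proof
  assume "of_nat m = (0::'a)"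
  then have "CHAR('a) dvd m" by (simp add: of_nat_eq_0_iff_char_dvd)
  moreover have "CHAR('a) dvd card (UNIV :: 'a set)"
    using of_nat_card_finite[where 'a='a] by (simp add: of_nat_eq_0_iff_char_dvd)
  ultimately have "CHAR('a) dvd 1" using assms
    by (metis coprime_common_divisor)
  then have "CHAR('a) = 1" by simp
  then show False using of_nat_CHAR[where 'a='a] by simp
qed

definition sig :: "nat \<Rightarrow> 'a::comm_ring_1 poly \<Rightarrow> 'a poly" where
  "sig m p = pcompose p (monom 1 (m - 1))"

lemma pcompose_power': "pcompose (p ^ n) q = (pcompose p q) ^ n"
  by (induction n) (simp_all add: pcompose_mult pcompose_1)

lemma pcompose_monom': "pcompose (monom c i) (monom 1 k) = (monom c (i * k) :: 'a::comm_ring_1 poly)"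
proof -
  have x: "pcompose (monom 1 (Suc 0)) q = q" for q :: "'a poly"
    by (simp add: monom_Suc pcompose_pCons pcompose_1)
  have "monom c i = smult c (monom 1 1 ^ i)" by (simp add: monom_power smult_monom)
  then have "pcompose (monom c i) (monom 1 k) = smult c ((monom 1 k) ^ i)"
    by (simp add: pcompose_smult pcompose_power' x)
  then show ?thesis by (simp add: monom_power smult_monom mult.commute)
qed

lemma sig_mult: "sig m (p * q) = sig m p * sig m q"
  by (simp add: sig_def pcompose_mult)
lemma sig_add: "sig m (p + q) = sig m p + sig m q"
  by (simp add: sig_def pcompose_add)
lemma sig_diff: "sig m (p - q) = sig m p - sig m q"
  by (simp add: sig_def pcompose_diff)
lemma sig_0: "sig m 0 = 0"
  by (simp add: sig_def)
lemma sig_monom: "sig m (monom c i) = monom c (i * (m - 1))"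
  by (simp add: sig_def pcompose_monom')

lemma cong_pcompose:
  assumes "[q1 = q2] (mod (n :: 'a::field poly))"
  shows "[pcompose p q1 = pcompose p q2] (mod n)"
proof (induction p)
  case (pCons a p)
  then show ?case by (simp add: pcompose_pCons cong_add cong_mult assms)
qed simp

lemma sig_xm1: "m \<ge> 1 \<Longrightarrow> [sig m (xm1 m) = (0 :: 'a::field poly)] (mod xm1 m)"
proof -
  assume m: "m \<ge> 1"
  have "sig m (xm1 m) = monom 1 (m * (m - 1)) - (1 :: 'a poly)"
    by (simp add: xm1_def sig_def pcompose_diff pcompose_monom' pcompose_1)
  also have "[\<dots> = monom 1 0 - 1] (mod xm1 m)"
    by (intro cong_diff cong_refl monom_cong) simp
  finally show ?thesis by simp
qed

lemma sig_cong:
  assumes "m \<ge> 1" "[p = q] (mod xm1 m)"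
  shows "[sig m p = sig m (q :: 'a::field poly)] (mod xm1 m)"
proof -
  obtain r where r: "p - q = xm1 m * r" using assms(2) by (auto simp: cong_iff_dvd_diff)
  have "sig m p - sig m q = sig m (xm1 m) * sig m r" by (metis r sig_diff sig_mult)
  moreover have "[sig m (xm1 m) * sig m r = 0 * sig m r] (mod xm1 m)"
    by (intro cong_mult sig_xm1 assms cong_refl)
  then have "xm1 m dvd sig m (xm1 m) * sig m r" by (simp only: mult_zero_left cong_0_iff)
  ultimately show ?thesis unfolding cong_iff_dvd_diff by simp
qed

lemma sig_dvd: "m \<ge> 1 \<Longrightarrow> xm1 m dvd p \<Longrightarrow> xm1 m dvd sig m (p :: 'a::field poly)"
  using sig_cong[of m p 0] unfolding sig_0 cong_0_iff by blast

lemma sq_mod_lemma: "(k * k) mod Suc k = 1 mod Suc (k::nat)"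
proof (cases k)
  case (Suc j)
  have e: "Suc j * Suc j = 1 + j * Suc (Suc j)" by simp
  have "(1 + j * Suc (Suc j)) mod Suc (Suc j) = 1 mod Suc (Suc j)" by (rule mod_mult_self1)
  then show ?thesis unfolding Suc e .
qed simp

lemma sig_sig:
  assumes "m \<ge> 1"
  shows "[sig m (sig m p) = (p :: 'a::field poly)] (mod xm1 m)"
proof -
  have "sig m (sig m p) = pcompose p (monom 1 ((m - 1) * (m - 1)))"
    by (simp add: sig_def pcompose_monom' flip: pcompose_assoc)
  also have "[\<dots> = pcompose p (monom 1 1)] (mod xm1 m)"
  proof (intro cong_pcompose monom_cong)
    obtain k where "m = Suc k" using assms by (cases m) auto
    then show "(m - 1) * (m - 1) mod m = 1 mod m"
      using sq_mod_lemma[of k] by simp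
  qed
  also have "pcompose p (monom 1 1) = p" by (metis pcompose_idR one_pCons monom_Suc monom_0 One_nat_def)
  finally show ?thesis .
qed

lemma coeff_reflect: "coeff (reflect_m m f) j = (if j \<le> m then coeff f (m - j) else 0)"
proof -
  have "coeff (reflect_m m f) j = (\<Sum>i\<le>m. if i = j then coeff f (m - i) else 0)"
    unfolding reflect_m_def coeff_sum coeff_monom by (rule refl)
  also have "\<dots> = (if j \<le> m then coeff f (m - j) else 0)"
    by (subst sum.delta) auto
  finally show ?thesis .
qed

lemma exp_mod_lemma:
  assumes "m \<ge> 1" "j \<le> m"
  shows "(m - j) mod m = (j * (m - 1)) mod (m::nat)"
proof -
  obtain k where m: "m = Suc k" using assms(1) by (cases m) auto
  have e1: "j * k + j = j * Suc k" by simp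
  have e2: "Suc k - j + j = Suc k" using assms(2) m by simp
  have "[Suc k - j + j = j * k + j] (mod Suc k)"
    by (subst e1, subst e2) (simp only: cong_def mod_self mod_mult_self2_is_0)
  then have "[Suc k - j = j * k] (mod Suc k)" by (simp only: cong_add_rcancel_nat)
  then show ?thesis unfolding m cong_def by simp
qed

lemma reflect_cong:
  assumes "m \<ge> 1" "degree u \<le> m"
  shows "[reflect_m m u = sig m (u :: 'a::field poly)] (mod xm1 m)"
proof -
  have "sig m u = sig m (\<Sum>i\<le>m. monom (coeff u i) i)"
    using poly_as_sum_of_monoms'[OF assms(2)] by simp
  also have "\<dots> = (\<Sum>i\<le>m. monom (coeff u i) (i * (m - 1)))"
    by (simp add: sig_def pcompose_sum pcompose_monom')
  finally have s: "sig m u = (\<Sum>i\<le>m. monom (coeff u i) (i * (m - 1)))" .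
  have "reflect_m m u = (\<Sum>i\<le>m. monom (coeff u i) (m - i))"
    unfolding reflect_m_def
    by (rule sum.reindex_bij_witness[of _ "\<lambda>i. m - i" "\<lambda>i. m - i"]; auto)
  also have "[\<dots> = (\<Sum>i\<le>m. monom (coeff u i) (i * (m - 1)))] (mod xm1 m)"
    by (intro cong_sum monom_cong exp_mod_lemma assms(1)) simp
  finally show ?thesis using s by simp
qed

lemma coeff_mod0:
  assumes "m \<ge> 1" "degree w < 2 * m"
  shows "coeff (w mod xm1 m) 0 = coeff w 0 + coeff (w :: 'a::field poly) m"
proof -
  define w' where "w' = poly_cutoff m w + poly_shift m w"
  have split: "w = poly_cutoff m w + monom 1 m * poly_shift m w"
    by (rule poly_eqI) (simp add: coeff_poly_cutoff coeff_poly_shift coeff_monom_mult)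
  have "w - w' = xm1 m * poly_shift m w"
    unfolding w'_def xm1_def by (subst split) (simp add: algebra_simps)
  then have "[w = w'] (mod xm1 m)" by (simp add: cong_iff_dvd_diff)
  then have "w mod xm1 m = w' mod xm1 m" by (simp add: cong_def)
  also have "w' mod xm1 m = w'"
  proof (rule mod_poly_less)
    have "degree w' \<le> m - 1"
    proof (rule degree_le, intro allI impI)
      fix i assume i: "m - 1 < i"
      then have "coeff w (i + m) = 0" using assms(2)
        by (intro coeff_eq_0) simp
      with i show "coeff w' i = 0"
        by (simp add: w'_def coeff_poly_cutoff coeff_poly_shift)
    qed
    then show "degree w' < degree (xm1 m :: 'a poly)" using assms(1) by (simp add: degree_xm1)
  qed
  finally show ?thesis using assms(1) by (simp add: w'_def coeff_poly_cutoff coeff_poly_shift)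
qed

lemma deg_mod_lt: "m \<ge> 1 \<Longrightarrow> degree (x mod xm1 m :: 'a::field poly) < m"
  using degree_mod_less[OF xm1_nz[of m], of x] by (auto simp: degree_xm1)

lemma degree_reflect: "degree (reflect_m m f) \<le> m"
  by (rule degree_le) (simp add: coeff_reflect)

lemma ip_eq:
  assumes m: "m \<ge> 1" and u: "degree u < m" and v: "degree v < m"
  shows "(\<Sum>i<m. coeff u i * coeff v i) = coeff ((u * reflect_m m v) mod xm1 m) (0 :: nat)"
proof -
  have dw: "degree (u * reflect_m m (v :: 'a::field poly)) < 2 * m"
    using degree_mult_le[of u "reflect_m m v"] degree_reflect[of m v] u by linarith
  have c0: "coeff (u * reflect_m m v) 0 = 0"
    using v by (simp add: coeff_mult coeff_reflect coeff_eq_0)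
  have "coeff (u * reflect_m m v) m = (\<Sum>i\<le>m. coeff u i * coeff v i)"
    unfolding coeff_mult by (rule sum.cong) (auto simp: coeff_reflect)
  also have "\<dots> = (\<Sum>i<m. coeff u i * coeff v i)"
    using u by (simp add: lessThan_Suc_atMost[symmetric] coeff_eq_0)
  finally show ?thesis using coeff_mod0[OF m dw] c0 by simp
qed

lemma ann_dvd:
  assumes m: "m \<ge> 1" and h: "\<And>a. coeff ((a * P) mod xm1 m) 0 = (0 :: 'a::field)"
  shows "xm1 m dvd P"
proof -
  define r where "r = P mod xm1 m"
  have dr: "degree r < m" unfolding r_def using deg_mod_lt[OF m] .
  have "coeff r j = 0" for j
  proof (cases "j < m")
    case True
    define k where "k = m - j"
    have k: "1 \<le> k" "k \<le> m" "j = m - k" using True by (auto simp: k_def)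
    have dw: "degree (monom 1 k * r) < 2 * m"
      using degree_mult_le[of "monom 1 k" r] dr k by (simp add: degree_monom_eq)
    have "(monom 1 k * P) mod xm1 m = (monom 1 k * r) mod xm1 m"
      unfolding r_def by (simp add: mod_mult_right_eq)
    then have "0 = coeff ((monom 1 k * r) mod xm1 m) 0" using h[of "monom 1 k"] by simp
    also have "\<dots> = coeff r j" using coeff_mod0[OF m dw] k by (simp add: coeff_monom_mult)
    finally show ?thesis by simp
  next
    case False
    then show ?thesis using dr by (simp add: coeff_eq_0)
  qed
  then have "r = 0" by (simp add: poly_eq_iff)
  then show ?thesis unfolding r_def by (simp add: dvd_eq_mod_eq_0)
qed

lemma ip_code:
  assumes m: "m \<ge> 1" and v: "v \<in> R2 m"
  shows "eucl_ip m (a * g11 mod xm1 m, a * g12 mod xm1 m) v =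
    coeff ((a * (g11 * reflect_m m (fst v) + g12 * reflect_m m (snd v))) mod xm1 m) (0 :: nat)"
    (is "?L = ?R")
proof -
  obtain v1 v2 where vv: "v = (v1, v2)" "degree v1 < m" "degree (v2 :: 'a::field poly) < m"
    using v by (auto simp: R2_def)
  let ?X = "(a * g11 mod xm1 m) * reflect_m m v1" and ?Y = "(a * g12 mod xm1 m) * reflect_m m v2"
  have "?L = coeff (?X mod xm1 m) 0 + coeff (?Y mod xm1 m) 0"
    unfolding eucl_ip_def vv fst_conv snd_conv sum.distrib
    using ip_eq[OF m deg_mod_lt[OF m] vv(2)] ip_eq[OF m deg_mod_lt[OF m] vv(3)] by simp
  also have "\<dots> = coeff ((?X + ?Y) mod xm1 m) 0" by (simp add: poly_mod_add_left)
  also have "(?X + ?Y) mod xm1 m = (a * (g11 * reflect_m m v1 + g12 * reflect_m m v2)) mod xm1 m"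
  proof -
    have "[?X + ?Y = (a * g11) * reflect_m m v1 + (a * g12) * reflect_m m v2] (mod xm1 m)"
      by (intro cong_add cong_mult cong_refl) (simp_all add: cong_def)
    then show ?thesis by (simp add: cong_def algebra_simps)
  qed
  finally show ?thesis by (simp add: vv)
qed

lemma dual_iff:
  assumes m: "m \<ge> 1" and v: "v \<in> R2 m"
  shows "(\<forall>c\<in>qc_code m g11 g12. eucl_ip m c v = 0) \<longleftrightarrow>
    xm1 m dvd (g11 * reflect_m m (fst v) + g12 * reflect_m m (snd v) :: 'a::field poly)"
proof
  assume H: "\<forall>c\<in>qc_code m g11 g12. eucl_ip m c v = 0"
  have "coeff ((a * (g11 * reflect_m m (fst v) + g12 * reflect_m m (snd v))) mod xm1 m) 0 = 0" for a
  proof -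
    have "(a * g11 mod xm1 m, a * g12 mod xm1 m) \<in> qc_code m g11 g12" by (auto simp: qc_code_def)
    with H have "eucl_ip m (a * g11 mod xm1 m, a * g12 mod xm1 m) v = 0" by blast
    then show ?thesis using ip_code[OF m v, of a g11 g12] by simp
  qed
  then show "xm1 m dvd (g11 * reflect_m m (fst v) + g12 * reflect_m m (snd v))"
    using ann_dvd[OF m] by blast
next
  assume d: "xm1 m dvd (g11 * reflect_m m (fst v) + g12 * reflect_m m (snd v))"
  show "\<forall>c\<in>qc_code m g11 g12. eucl_ip m c v = 0"
  proof
    fix c assume "c \<in> qc_code m g11 g12"
    then obtain a where c: "c = (a * g11 mod xm1 m, a * g12 mod xm1 m)" by (auto simp: qc_code_def)
    have "xm1 m dvd a * (g11 * reflect_m m (fst v) + g12 * reflect_m m (snd v))" using d by simp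
    then show "eucl_ip m c v = 0" unfolding c ip_code[OF m v] by (simp add: dvd_eq_mod_eq_0)
  qed
qed

lemma sqfree_xm1:
  assumes m: "m \<ge> 1" and k: "of_nat m \<noteq> (0::'a::field)" and d: "c * c dvd (xm1 m :: 'a poly)"
  shows "is_unit c"
proof -
  obtain t where t: "xm1 m = c * (c * t)" using d by (metis dvdE mult.assoc)
  have "pderiv (xm1 m :: 'a poly) = monom (of_nat m) (m - 1)"
    by (simp add: xm1_def pderiv_diff pderiv_monom)
  also have "\<dots> = smult (of_nat m) (monom 1 (m - 1))" by (simp add: smult_monom)
  finally have pd: "pderiv (xm1 m :: 'a poly) = smult (of_nat m) (monom 1 (m - 1))" .
  have "c dvd pderiv (xm1 m)" unfolding t pderiv_mult by simp
  then have c1: "c dvd monom 1 (m - 1)" unfolding pd using k by (rule dvd_smult_cancel)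
  have "monom (1::'a) m = monom 1 1 * monom 1 (m - 1)" using m by (simp add: mult_monom)
  then have c2: "c dvd monom 1 m" using c1 by simp
  have c3: "c dvd xm1 m" using d by (metis dvd_mult_right)
  have "c dvd monom 1 m - xm1 m" using c2 c3 by (rule dvd_diff)
  then show ?thesis by (simp add: xm1_def)
qed

lemma term_cong:
  assumes m: "m \<ge> 1" and dg: "degree g \<le> m"
  shows "[g * reflect_m m (a * g mod xm1 m) = sig m a * (g * reflect_m m (g :: 'a::field poly))] (mod xm1 m)"
proof -
  have "[reflect_m m (a * g mod xm1 m) = sig m (a * g mod xm1 m)] (mod xm1 m)"
    using deg_mod_lt[OF m, of "a * g"] by (intro reflect_cong[OF m]) simp
  also have "[sig m (a * g mod xm1 m) = sig m (a * g)] (mod xm1 m)"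
    by (rule sig_cong[OF m]) (simp add: cong_def)
  also have "sig m (a * g) = sig m a * sig m g" by (rule sig_mult)
  also have "[sig m a * sig m g = sig m a * reflect_m m g] (mod xm1 m)"
    by (rule cong_mult[OF cong_refl cong_sym[OF reflect_cong[OF m dg]]])
  finally have "[g * reflect_m m (a * g mod xm1 m) = g * (sig m a * reflect_m m g)] (mod xm1 m)"
    by (rule cong_scalar_left)
  then show ?thesis by (simp add: mult_ac)
qed

lemma sigG:
  assumes m: "m \<ge> 1" and d1: "degree g1 \<le> m" and d2: "degree g2 \<le> m"
  shows "[sig m (g1 * reflect_m m g1 + g2 * reflect_m m g2) =
          g1 * reflect_m m g1 + g2 * reflect_m m (g2 :: 'a::field poly)] (mod xm1 m)"
proof -
  have one: "[sig m (g * reflect_m m g) = g * reflect_m m g] (mod xm1 m)" if "degree g \<le> m" for g :: "'a poly"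
  proof -
    have a: "[sig m g = reflect_m m g] (mod xm1 m)" by (rule cong_sym[OF reflect_cong[OF m that]])
    have "[sig m (reflect_m m g) = sig m (sig m g)] (mod xm1 m)"
      by (intro sig_cong m reflect_cong that)
    also have "[sig m (sig m g) = g] (mod xm1 m)" by (rule sig_sig[OF m])
    finally have b: "[sig m (reflect_m m g) = g] (mod xm1 m)" .
    have "[sig m g * sig m (reflect_m m g) = reflect_m m g * g] (mod xm1 m)"
      by (rule cong_mult[OF a b])
    then show ?thesis by (simp add: sig_mult mult.commute)
  qed
  show ?thesis unfolding sig_add by (intro cong_add one d1 d2)
qed

lemma zero_iff_h:
  fixes g11 g12 a :: "'a::field_gcd poly"
  assumes N0: "xm1 m \<noteq> (0 :: 'a::field_gcd poly)" and g11: "g11 dvd xm1 m"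
  shows "(a * g11 mod xm1 m = 0 \<and> a * g12 mod xm1 m = 0) \<longleftrightarrow>
         (xm1 m div gcd g11 g12) dvd a"
proof -
  define g where "g = gcd g11 g12"
  have gN: "g dvd xm1 m" unfolding g_def using g11 by (meson dvd_trans gcd_dvd1)
  have g0: "g \<noteq> 0" using gN N0 by (metis dvd_0_left)
  have "(a * g11 mod xm1 m = 0 \<and> a * g12 mod xm1 m = 0) \<longleftrightarrow> xm1 m dvd a * g11 \<and> xm1 m dvd a * g12"
    by (simp add: dvd_eq_mod_eq_0)
  also have "\<dots> \<longleftrightarrow> xm1 m dvd gcd (a * g11) (a * g12)" by simp
  also have "gcd (a * g11) (a * g12) = normalize (a * g)" unfolding g_def by (rule gcd_mult_left)
  also have "xm1 m dvd normalize (a * g) \<longleftrightarrow> (xm1 m div g) * g dvd a * g"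
    using gN by simp
  also have "\<dots> \<longleftrightarrow> (xm1 m div g) dvd a" using g0 by simp
  finally show ?thesis unfolding g_def .
qed

theorem theorem4p3:
  fixes g11 g12 :: "'a::{field_gcd, finite} poly" and m :: nat
  assumes "m \<ge> 1"
    and "coprime (card (UNIV :: 'a set)) m"
    and "g11 dvd xm1 m"
    and "degree g12 < m"
  shows "euclidean_LCD m (qc_code m g11 g12) \<longleftrightarrow>
    gcd (xm1 m div gcd g11 g12)
        (g11 * reflect_m m g11 + g12 * reflect_m m g12) = 1"
proof -
  note m = assms(1)
  define N where "N = (xm1 m :: 'a poly)"
  define G where "G = g11 * reflect_m m g11 + g12 * reflect_m m g12"
  define h where "h = N div gcd g11 g12"
  have N0: "N \<noteq> 0" unfolding N_def by (rule xm1_nz[OF m])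
  have d1: "degree g11 \<le> m"
    using dvd_imp_degree_le[OF assms(3) xm1_nz[OF m]] degree_xm1[OF m, where 'a='a] by simp
  have d2: "degree g12 \<le> m" using assms(4) by simp
  have hN: "h dvd N" unfolding h_def
    by (metis N0 N_def assms(3) dvd_div_mult_self dvd_triv_left gcd_dvd1 dvd_trans)
  have sG: "[sig m G = G] (mod N)" unfolding N_def G_def by (rule sigG[OF m d1 d2])
  have inC: "(a * g11 mod N, a * g12 mod N) \<in> qc_code m g11 g12" for a
    unfolding N_def qc_code_def by blast
  have inR2: "(a * g11 mod N, a * g12 mod N) \<in> R2 m" for a
    unfolding N_def R2_def using deg_mod_lt[OF m] by blast
  have dual_a: "(a * g11 mod N, a * g12 mod N) \<in> eucl_dual m (qc_code m g11 g12) \<longleftrightarrow>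
      N dvd sig m a * G" for a
  proof -
    have "(a * g11 mod N, a * g12 mod N) \<in> eucl_dual m (qc_code m g11 g12) \<longleftrightarrow>
        N dvd g11 * reflect_m m (a * g11 mod N) + g12 * reflect_m m (a * g12 mod N)"
      unfolding eucl_dual_def using dual_iff[OF m inR2[of a], of g11 g12] inR2[of a]
      by (simp add: N_def)
    also have "[g11 * reflect_m m (a * g11 mod N) + g12 * reflect_m m (a * g12 mod N) =
        sig m a * (g11 * reflect_m m g11) + sig m a * (g12 * reflect_m m g12)] (mod N)"
      unfolding N_def by (intro cong_add term_cong m d1 d2)
    then have "N dvd g11 * reflect_m m (a * g11 mod N) + g12 * reflect_m m (a * g12 mod N) \<longleftrightarrow>
        N dvd sig m a * G"
      unfolding G_def by (simp add: cong_dvd_iff distrib_left)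
    finally show ?thesis .
  qed
  have A: "euclidean_LCD m (qc_code m g11 g12) \<longleftrightarrow> (\<forall>a. N dvd sig m a * G \<longrightarrow> h dvd a)"
  proof -
    have z: "(0, 0) \<in> qc_code m g11 g12 \<inter> eucl_dual m (qc_code m g11 g12)"
      using inC[of 0] dual_a[of 0] by (simp add: sig_0)
    have "euclidean_LCD m (qc_code m g11 g12) \<longleftrightarrow>
        (\<forall>a. (a * g11 mod N, a * g12 mod N) \<in> eucl_dual m (qc_code m g11 g12) \<longrightarrow>
             (a * g11 mod N, a * g12 mod N) = (0, 0))"
    proof -
      have "euclidean_LCD m (qc_code m g11 g12) \<longleftrightarrow>
          (\<forall>x\<in>qc_code m g11 g12. x \<in> eucl_dual m (qc_code m g11 g12) \<longrightarrow> x = (0, 0))"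
        unfolding euclidean_LCD_def using z by blast
      also have "\<dots> \<longleftrightarrow> (\<forall>a. (a * g11 mod N, a * g12 mod N) \<in> eucl_dual m (qc_code m g11 g12) \<longrightarrow>
             (a * g11 mod N, a * g12 mod N) = (0, 0))"
        unfolding N_def by (subst (1) qc_code_def) blast
      finally show ?thesis .
    qed
    also have "\<dots> \<longleftrightarrow> (\<forall>a. N dvd sig m a * G \<longrightarrow> h dvd a)"
      using dual_a zero_iff_h[OF N0[unfolded N_def] assms(3), of _ g12]
      by (simp add: N_def h_def)
    finally show ?thesis .
  qed
  have B: "(\<forall>a. N dvd sig m a * G \<longrightarrow> h dvd a) \<longleftrightarrow> coprime h G"
  proof
    assume H: "\<forall>a. N dvd sig m a * G \<longrightarrow> h dvd a"
    show "coprime h G"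
    proof (rule ccontr)
      assume "\<not> coprime h G"
      then obtain c where c: "c dvd h" "c dvd G" "\<not> is_unit c" by (rule not_coprimeE)
      have cN: "c dvd N" using c(1) hN by (rule dvd_trans)
      define r where "r = N div c"
      have Ncr: "N = c * r" unfolding r_def using cN by simp
      obtain t where t: "G = c * t" using c(2) by (rule dvdE)
      have "N dvd r * G" unfolding t Ncr by simp
      then have "N dvd sig m (r * G)" unfolding N_def by (rule sig_dvd[OF m])
      moreover have "[sig m r * G = sig m (r * G)] (mod N)"
        unfolding sig_mult by (rule cong_mult[OF cong_refl cong_sym[OF sG]])
      ultimately have "N dvd sig m r * G" using cong_dvd_iff by blast
      then have "h dvd r" using H by blast
      then have "c dvd r" using c(1) by (metis dvd_trans)
      then have "c * c dvd N" unfolding Ncr by simp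
      then have "is_unit c"
        unfolding N_def by (rule sqfree_xm1[OF m of_nat_m_nz[OF assms(2)]])
      with c(3) show False by simp
    qed
  next
    assume cop: "coprime h G"
    show "\<forall>a. N dvd sig m a * G \<longrightarrow> h dvd a"
    proof (intro allI impI)
      fix a assume "N dvd sig m a * G"
      then have "N dvd sig m (sig m a * G)" unfolding N_def by (rule sig_dvd[OF m])
      moreover have "[sig m (sig m a * G) = a * G] (mod N)"
        unfolding sig_mult N_def by (rule cong_mult[OF sig_sig[OF m] sG[unfolded N_def]])
      ultimately have "N dvd a * G" using cong_dvd_iff by blast
      then have "h dvd a * G" using hN by (metis dvd_trans)
      then show "h dvd a" using cop by (simp add: coprime_dvd_mult_left_iff)
    qed
  qed
  show ?thesis unfolding A B by (simp add: coprime_iff_gcd_eq_1 G_def h_def N_def)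
qed

end
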